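(* Let $d\ge1$, $N\ge1$, let $a:\mathbb{Z}^d\to\mathbb{R}$ define a symmetric, spatially homogeneous, irreducible random walk satisfying condition (F) or condition (HT), let $x_1,\dots,x_N\in\mathbb{Z}^d$ be distinct branching sources, and let $\mathscr{H}_\beta=\mathscr{A}+\beta\sum_{i=1}^N\delta_{x_i}\delta_{x_i}^T$. Then the branching random walk is weakly supercritical as $\beta\downarrow\beta_c$: there exists $\varepsilon_0>0$ such that for every $\beta\in(\beta_c,\beta_c+\varepsilon_0)$ the operator $\mathscr{H}_\beta$ has a simple positive eigenvalue $\lambda(\beta)$, and $\lambda(\beta)\to0$ as $\beta\downarrow\beta_c$.
   Context: $a$ satisfies $a(0)<0$, $a(z)\ge0$ for $z\ne0$, $a(z)=a(-z)$, $\sum_z a(z)=0$, and irreducibility (every $z\in\mathbb{Z}^d$ is a finite sum of vectors $z_i$ with $a(z_i)\ne0$). $(\mathscr{A}u)(x)=\sum_{x'}a(x-x')u(x')$ on $l^2(\mathbb{Z}^d)$; $\delta_x$ is the indicator vector of $x$; $\mathscr{H}_\beta$ is the evolutionary operator of the mean number of particles of a branching random walk with sources of intensity $\beta$ at $x_1,\dots,x_N$. Condition (F): $\sum_z|z|^2a(z)<\infty$. Condition (HT): $a(z)\sim H(z/|z|)|z|^{-(d+\alpha)}$ as $|z|\to\infty$ for some $\alpha\in(0,2)$ and some continuous positive symmetric function $H$ on $\mathbb{S}^{d-1}$. $\beta_c$ is the minimal value of $\beta$ such that the spectrum of $\mathscr{H}_\beta$ contains positive eigenvalues for all $\beta>\beta_c$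 sufficiently close to $\beta_c$ (the walk is called supercritical for such $\beta$). *)

theory Defs
  imports "HOL-Analysis.Analysis" "HOL-Library.Landau_Symbols"
begin

text \<open>Lattice points of Z^d are vectors of type int^'d; the dimension d is CARD('d).\<close>

definition zvec :: "int ^ 'd \<Rightarrow> real ^ 'd" where
  "zvec z = (\<chi> i. real_of_int (z $ i))"

definition walk_kernel :: "(int ^ 'd \<Rightarrow> real) \<Rightarrow> bool" where
  "walk_kernel a \<longleftrightarrow>
     a 0 < 0 \<and> (\<forall>z. z \<noteq> 0 \<longrightarrow> a z \<ge> 0) \<and> (\<forall>z. a z = a (- z)) \<and>
     (a has_sum 0) UNIV \<and>
     (\<forall>z. \<exists>zs. (\<forall>w\<in>set zs. a w \<noteq> 0) \<and> sum_list zs = z)"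

definition condF :: "(int ^ 'd \<Rightarrow> real) \<Rightarrow> bool" where
  "condF a \<longleftrightarrow> (\<lambda>z. (norm (zvec z))\<^sup>2 * a z) summable_on UNIV"

definition condHT :: "(int ^ 'd \<Rightarrow> real) \<Rightarrow> bool" where
  "condHT a \<longleftrightarrow> (\<exists>\<alpha>::real. 0 < \<alpha> \<and> \<alpha> < 2 \<and>
     (\<exists>H :: real ^ 'd \<Rightarrow> real. continuous_on (sphere 0 1) H \<and>
        (\<forall>s\<in>sphere 0 1. H s > 0 \<and> H (- s) = H s) \<and>
        (a \<sim>[cofinite] (\<lambda>z. H (sgn (zvec z)) * norm (zvec z) powr (- (real CARD('d) + \<alpha>))))))"

definition l2 :: "(int ^ 'd \<Rightarrow> real) set" where
  "l2 = {u. (\<lambda>x. (u x)\<^sup>2) summable_on UNIV}"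

definition opA :: "(int ^ 'd \<Rightarrow> real) \<Rightarrow> (int ^ 'd \<Rightarrow> real) \<Rightarrow> int ^ 'd \<Rightarrow> real" where
  "opA a u x = (\<Sum>\<^sub>\<infinity>x'. a (x - x') * u x')"

definition opH :: "(int ^ 'd \<Rightarrow> real) \<Rightarrow> (int ^ 'd) list \<Rightarrow> real \<Rightarrow> (int ^ 'd \<Rightarrow> real) \<Rightarrow> int ^ 'd \<Rightarrow> real" where
  "opH a xs \<beta> u x = opA a u x + \<beta> * (\<Sum>xi\<leftarrow>xs. (if x = xi then u xi else 0))"

definition eigenspace_H :: "(int ^ 'd \<Rightarrow> real) \<Rightarrow> (int ^ 'd) list \<Rightarrow> real \<Rightarrow> real \<Rightarrow> (int ^ 'd \<Rightarrow> real) set" where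
  "eigenspace_H a xs \<beta> mu = {u \<in> l2. opH a xs \<beta> u = (\<lambda>x. mu * u x)}"

definition is_eigenvalue :: "(int ^ 'd \<Rightarrow> real) \<Rightarrow> (int ^ 'd) list \<Rightarrow> real \<Rightarrow> real \<Rightarrow> bool" where
  "is_eigenvalue a xs \<beta> mu \<longleftrightarrow> (\<exists>u \<in> eigenspace_H a xs \<beta> mu. u \<noteq> (\<lambda>_. 0))"

text \<open>Simple eigenvalue: one-dimensional eigenspace (H_beta is bounded self-adjoint,
  so geometric and algebraic multiplicities agree).\<close>
definition is_simple_eigenvalue :: "(int ^ 'd \<Rightarrow> real) \<Rightarrow> (int ^ 'd) list \<Rightarrow> real \<Rightarrow> real \<Rightarrow> bool" where
  "is_simple_eigenvalue a xs \<beta> mu \<longleftrightarrow>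
     (\<exists>u \<in> eigenspace_H a xs \<beta> mu. u \<noteq> (\<lambda>_. 0) \<and>
        (\<forall>v \<in> eigenspace_H a xs \<beta> mu. \<exists>c::real. v = (\<lambda>x. c * u x)))"

definition has_pos_eigenvalue :: "(int ^ 'd \<Rightarrow> real) \<Rightarrow> (int ^ 'd) list \<Rightarrow> real \<Rightarrow> bool" where
  "has_pos_eigenvalue a xs \<beta> \<longleftrightarrow> (\<exists>mu>0. is_eigenvalue a xs \<beta> mu)"

definition beta_c :: "(int ^ 'd \<Rightarrow> real) \<Rightarrow> (int ^ 'd) list \<Rightarrow> real" where
  "beta_c a xs = Inf {b. \<exists>\<epsilon>>0. \<forall>\<beta>. b < \<beta> \<and> \<beta> < b + \<epsilon> \<longrightarrow> has_pos_eigenvalue a xs \<beta>}"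

end

theory Submission
  imports Defs
begin


definition Qf :: "'a set \<Rightarrow> ('a \<Rightarrow> 'a \<Rightarrow> real) \<Rightarrow> ('a \<Rightarrow> real) \<Rightarrow> real" where
  "Qf X K u = (\<Sum>x\<in>X. \<Sum>y\<in>X. u x * K x y * u y)"
definition Nf :: "'a set \<Rightarrow> ('a \<Rightarrow> real) \<Rightarrow> real" where
  "Nf X u = (\<Sum>x\<in>X. (u x)^2)"
definition Kf :: "'a set \<Rightarrow> ('a \<Rightarrow> 'a \<Rightarrow> real) \<Rightarrow> ('a \<Rightarrow> real) \<Rightarrow> 'a \<Rightarrow> real" where
  "Kf X K u x = (\<Sum>y\<in>X. K x y * u y)"

lemma Qf_Kf: "Qf X K u = (\<Sum>x\<in>X. u x * Kf X K u x)"
  unfolding Qf_def Kf_def by (simp add: sum_distrib_left mult.assoc)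

lemma compact_box:
  fixes X :: "'a set"
  shows "compact {u::'a\<Rightarrow>real. \<forall>x. u x \<in> (if x \<in> X then {-1..1} else {0})}"
proof -
  have "compactin (product_topology (\<lambda>i. euclidean) UNIV)
          (PiE UNIV (\<lambda>x. if x \<in> X then {-1..1::real} else {0}))"
    by (subst compactin_PiE) auto
  moreover have "PiE UNIV (\<lambda>x. if x \<in> X then {-1..1::real} else {0}) =
      {u::'a\<Rightarrow>real. \<forall>x. u x \<in> (if x \<in> X then {-1..1} else {0})}"
    by (auto simp: PiE_def Pi_def extensional_def)
  ultimately show ?thesis by (simp add: euclidean_product_topology)
qed

lemma cont_Nf: "continuous_on UNIV (Nf X :: ('a \<Rightarrow> real) \<Rightarrow> real)"
  unfolding Nf_def
  by (intro continuous_intros continuous_on_compose2[OF continuous_on_product_coordinates]) auto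

lemma cont_Qf: "continuous_on UNIV (Qf X K :: ('a \<Rightarrow> real) \<Rightarrow> real)"
  unfolding Qf_def
  by (intro continuous_intros continuous_on_compose2[OF continuous_on_product_coordinates]) auto

lemma Nf_zero_imp: assumes "finite X" "Nf X u = 0" "x \<in> X" shows "u x = 0"
  using assms unfolding Nf_def by (simp add: sum_nonneg_eq_0_iff)

lemma Qf_cong: "(\<And>x. x \<in> X \<Longrightarrow> u x = w x) \<Longrightarrow> Qf X K u = Qf X K w"
  unfolding Qf_def by (intro sum.cong) auto
lemma Nf_cong: "(\<And>x. x \<in> X \<Longrightarrow> u x = w x) \<Longrightarrow> Nf X u = Nf X w"
  unfolding Nf_def by (intro sum.cong) auto
lemma Kf_cong: "(\<And>x. x \<in> X \<Longrightarrow> u x = w x) \<Longrightarrow> Kf X K u y = Kf X K w y"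
  unfolding Kf_def by (intro sum.cong) auto

lemma Qf_scale: "Qf X K (\<lambda>x. t * u x) = t^2 * Qf X K u"
  unfolding Qf_def by (simp add: sum_distrib_left power2_eq_square mult_ac)
lemma Nf_scale: "Nf X (\<lambda>x. t * u x) = t^2 * Nf X u"
  unfolding Nf_def by (simp add: sum_distrib_left power2_eq_square mult_ac)

lemma exists_max:
  fixes K :: "'a \<Rightarrow> 'a \<Rightarrow> real"
  assumes "finite X" "X \<noteq> {}"
  shows "\<exists>g. (\<forall>u. Qf X K u \<le> g * Nf X u) \<and> (\<exists>u. Nf X u = 1 \<and> Qf X K u = g)"
proof -
  define S where "S = {u::'a\<Rightarrow>real. \<forall>x. u x \<in> (if x \<in> X then {-1..1} else {0})} \<inter> Nf X -` {1}"
  have "closed (Nf X -` {1::real})"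
    by (rule closed_vimage[OF closed_singleton cont_Nf])
  then have cS: "compact S" unfolding S_def
    by (rule compact_Int_closed[OF compact_box])
  obtain x1 where x1: "x1 \<in> X" using assms by auto
  have "(\<lambda>x. if x = x1 then 1 else 0) \<in> S" using x1 assms(1)
  proof -
    have "Nf X (\<lambda>x. if x = x1 then 1 else 0) = (\<Sum>x\<in>X. if x = x1 then 1 else 0)"
      unfolding Nf_def by (intro sum.cong) auto
    then have "Nf X (\<lambda>x. if x = x1 then 1 else 0) = 1" using x1 assms(1) by simp
    then show ?thesis using x1 by (auto simp: S_def)
  qed
  then have neS: "S \<noteq> {}" by auto
  obtain u0 where u0: "u0 \<in> S" "\<And>u. u \<in> S \<Longrightarrow> Qf X K u \<le> Qf X K u0"
    using continuous_attains_sup[OF cS neS continuous_on_subset[OF cont_Qf]] by blast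
  have N1: "Nf X u0 = 1" using u0 by (auto simp: S_def)
  show ?thesis
  proof (rule exI[of _ "Qf X K u0"], rule conjI[rotated])
    show "\<exists>u. Nf X u = 1 \<and> Qf X K u = Qf X K u0" using N1 by auto
    show "\<forall>u. Qf X K u \<le> Qf X K u0 * Nf X u"
    proof
    fix u
    show "Qf X K u \<le> Qf X K u0 * Nf X u"
    proof (cases "Nf X u = 0")
      case True
      then have "Qf X K u = Qf X K (\<lambda>_. 0)"
        by (intro Qf_cong) (use Nf_zero_imp[OF assms(1) True] in auto)
      then show ?thesis using True by (simp add: Qf_def)
    next
      case False
      have Npos: "Nf X u > 0" using False unfolding Nf_def
        by (metis Nf_def sum_nonneg zero_le_power2 order_le_less)
      define s where "s = sqrt (Nf X u)"
      have s: "s > 0" "s^2 = Nf X u" using Npos by (auto simp: s_def)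
      define w where "w = (\<lambda>x. if x \<in> X then (1/s) * u x else 0)"
      have bound: "(u x)^2 \<le> Nf X u" if "x \<in> X" for x
        unfolding Nf_def using assms(1) that by (intro member_le_sum) auto
      have "w \<in> S"
      proof -
        have "\<bar>u x\<bar> \<le> s" if "x \<in> X" for x
          using bound[OF that] s by (metis abs_le_square_iff abs_of_pos)
        then have "w x \<in> {-1..1}" if "x \<in> X" for x using that s
          by (auto simp: w_def abs_le_iff field_simps) (smt (verit))
        moreover have "Nf X w = 1"
          using Nf_scale[of X "1/s" u] s by (subst Nf_cong[of X w "\<lambda>x. (1/s) * u x"]) (auto simp: w_def field_simps)
        ultimately show ?thesis by (auto simp: S_def w_def)
      qed
      then have "Qf X K w \<le> Qf X K u0" by (rule u0)
      moreover have "Qf X K w = (1/s)^2 * Qf X K u"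
        using Qf_scale[of X K "1/s" u] by (subst Qf_cong[of X w "\<lambda>x. (1/s) * u x"]) (auto simp: w_def)
      ultimately show ?thesis using s Npos by (simp add: field_simps)
    qed
    qed
  qed
qed

lemma Kf_sym:
  assumes "\<forall>x\<in>X. \<forall>y\<in>X. K x y = K y x"
  shows "(\<Sum>x\<in>X. u x * Kf X K r x) = (\<Sum>x\<in>X. r x * Kf X K u x)"
proof -
  have "(\<Sum>x\<in>X. u x * Kf X K r x) = (\<Sum>x\<in>X. \<Sum>y\<in>X. u x * K x y * r y)"
    unfolding Kf_def by (simp add: sum_distrib_left mult.assoc)
  also have "\<dots> = (\<Sum>y\<in>X. \<Sum>x\<in>X. u x * K x y * r y)" by (rule sum.swap)
  also have "\<dots> = (\<Sum>y\<in>X. r y * Kf X K u y)"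
    unfolding Kf_def sum_distrib_left using assms by (intro sum.cong refl) (auto simp: mult_ac)
  finally show ?thesis .
qed

lemma lagrange:
  assumes fin: "finite X" and sym: "\<forall>x\<in>X. \<forall>y\<in>X. K x y = K y x"
    and bound: "\<And>w. Qf X K w \<le> g * Nf X w" and eq: "Qf X K u = g * Nf X u"
  shows "\<forall>x\<in>X. Kf X K u x = g * u x"
proof -
  define r where "r x = Kf X K u x - g * u x" for x
  define R where "R = (\<Sum>x\<in>X. r x * r x)"
  define D where "D = Qf X K r - g * Nf X r"
  have D: "D \<le> 0" using bound[of r] by (simp add: D_def)
  have expand: "Qf X K (\<lambda>x. u x + t * r x) - g * Nf X (\<lambda>x. u x + t * r x) = 2 * t * R + t^2 * D" for t
  proof -
    have Kl: "Kf X K (\<lambda>x. u x + t * r x) x = Kf X K u x + t * Kf X K r x" for x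
      unfolding Kf_def by (simp add: algebra_simps sum.distrib sum_distrib_left)
    have "Qf X K (\<lambda>x. u x + t * r x) = (\<Sum>x\<in>X. u x * Kf X K u x) + t * ((\<Sum>x\<in>X. u x * Kf X K r x) + (\<Sum>x\<in>X. r x * Kf X K u x)) + t^2 * (\<Sum>x\<in>X. r x * Kf X K r x)"
      unfolding Qf_Kf Kl by (simp add: algebra_simps sum.distrib sum_distrib_left power2_eq_square)
    also have "\<dots> = Qf X K u + 2 * t * (\<Sum>x\<in>X. r x * Kf X K u x) + t^2 * Qf X K r"
      using Kf_sym[OF sym, of u r] by (simp add: Qf_Kf)
    finally have q: "Qf X K (\<lambda>x. u x + t * r x) = Qf X K u + 2 * t * (\<Sum>x\<in>X. r x * Kf X K u x) + t^2 * Qf X K r" .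
    have n: "Nf X (\<lambda>x. u x + t * r x) = Nf X u + 2 * t * (\<Sum>x\<in>X. r x * u x) + t^2 * Nf X r"
      unfolding Nf_def by (simp add: algebra_simps sum.distrib sum_distrib_left power2_eq_square)
    have Rf: "R = (\<Sum>x\<in>X. r x * Kf X K u x) - g * (\<Sum>x\<in>X. r x * u x)"
    proof -
      have "R = (\<Sum>x\<in>X. r x * Kf X K u x - g * (r x * u x))"
        unfolding R_def by (intro sum.cong refl) (simp add: r_def algebra_simps)
      then show ?thesis by (simp add: sum_subtractf sum_distrib_left)
    qed
    have "Qf X K (\<lambda>x. u x + t * r x) - g * Nf X (\<lambda>x. u x + t * r x) =
       (Qf X K u - g * Nf X u) + 2 * t * ((\<Sum>x\<in>X. r x * Kf X K u x) - g * (\<Sum>x\<in>X. r x * u x)) + t^2 * (Qf X K r - g * Nf X r)"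
      unfolding q n by (simp add: algebra_simps)
    then show ?thesis unfolding Rf D_def using eq by simp
  qed
  have R0: "R \<ge> 0" unfolding R_def by (intro sum_nonneg) auto
  have "R = 0"
  proof (rule ccontr)
    assume "R \<noteq> 0"
    then have Rp: "R > 0" using R0 by auto
    define t where "t = R / (\<bar>D\<bar> + 1)"
    have t: "t > 0" "t * \<bar>D\<bar> < R" using Rp by (auto simp: t_def field_simps)
    have "2 * t * R + t^2 * D \<le> 0"
      using bound[of "\<lambda>x. u x + t * r x"] expand[of t] by simp
    moreover have "t^2 * D \<ge> - (t * (t * \<bar>D\<bar>))" using D by (simp add: power2_eq_square)
    moreover have "t * (t * \<bar>D\<bar>) < t * R" using t by simp
    moreover have "t * R > 0" using t Rp by simp
    ultimately show False by (simp add: algebra_simps)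
  qed
  then have "\<forall>x\<in>X. r x * r x = 0" using fin unfolding R_def
    by (subst (asm) sum_nonneg_eq_0_iff) auto
  then show ?thesis by (auto simp: r_def)
qed

lemma Qf_abs:
  assumes "\<forall>x\<in>X. \<forall>y\<in>X. K x y > 0"
  shows "Qf X K u \<le> Qf X K (\<lambda>x. \<bar>u x\<bar>)"
  unfolding Qf_def
proof (intro sum_mono)
  fix x y assume "x \<in> X" "y \<in> X"
  then have "K x y > 0" using assms by auto
  then show "u x * K x y * u y \<le> \<bar>u x\<bar> * K x y * \<bar>u y\<bar>"
    by (metis abs_ge_self abs_mult abs_of_pos)
qed

lemma Nf_abs: "Nf X (\<lambda>x. \<bar>u x\<bar>) = Nf X u" unfolding Nf_def by simp

lemma Qf_eig: "(\<forall>x\<in>X. Kf X K u x = g * u x) \<Longrightarrow> Qf X K u = g * Nf X u"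
  unfolding Qf_Kf Nf_def by (simp add: sum_distrib_left power2_eq_square mult_ac)

lemma pos_eig:
  assumes fin: "finite X" and sym: "\<forall>x\<in>X. \<forall>y\<in>X. K x y = K y x"
    and pos: "\<forall>x\<in>X. \<forall>y\<in>X. K x y > 0"
    and bound: "\<And>w. Qf X K w \<le> g * Nf X w" and eq: "Qf X K u = g * Nf X u"
    and Np: "Nf X u > 0"
  shows "g > 0 \<and> (\<forall>x\<in>X. \<bar>u x\<bar> > 0) \<and> (\<forall>x\<in>X. Kf X K (\<lambda>x. \<bar>u x\<bar>) x = g * \<bar>u x\<bar>)"
proof -
  define v where "v x = \<bar>u x\<bar>" for x
  have "Qf X K v = g * Nf X v"
    using Qf_abs[OF pos, of u] bound[of v] eq Nf_abs[of X u] unfolding v_def by simp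
  then have ev: "\<forall>x\<in>X. Kf X K v x = g * v x" by (rule lagrange[OF fin sym bound])
  obtain y where y: "y \<in> X" "u y \<noteq> 0"
    using Np unfolding Nf_def by (metis (no_types, lifting) power_zero_numeral sum.neutral less_irrefl)
  have vx: "g * v x > 0" if x: "x \<in> X" for x
  proof -
    have "0 < K x y * v y" using pos x y by (simp add: v_def)
    also have "\<dots> \<le> Kf X K v x" unfolding Kf_def
      using fin y pos x by (intro member_le_sum) (auto simp: v_def less_imp_le)
    finally show ?thesis using ev x by simp
  qed
  have "\<forall>x\<in>X. v x > 0 \<and> g > 0"
    using vx by (metis abs_ge_zero v_def zero_less_mult_iff not_less)
  then show ?thesis using ev y unfolding v_def by auto
qed

lemma perron_sym:
  fixes K :: "'a \<Rightarrow> 'a \<Rightarrow> real"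
  assumes fin: "finite X" and ne: "X \<noteq> {}" and sym: "\<forall>x\<in>X. \<forall>y\<in>X. K x y = K y x"
    and pos: "\<forall>x\<in>X. \<forall>y\<in>X. K x y > 0"
  shows "\<exists>g v. g > 0 \<and> (\<forall>x\<in>X. v x > 0) \<and> (\<forall>x\<in>X. Kf X K v x = g * v x) \<and>
    (\<forall>w. Qf X K w \<le> g * Nf X w) \<and>
    (\<forall>w. (\<forall>x\<in>X. Kf X K w x = g * w x) \<longrightarrow> (\<exists>c. \<forall>x\<in>X. w x = c * v x))"
proof -
  obtain g u where bound: "\<And>w. Qf X K w \<le> g * Nf X w" and u: "Nf X u = 1" "Qf X K u = g"
    using exists_max[OF fin ne, of K] by blast
  define v where "v x = \<bar>u x\<bar>" for x
  have pe: "g > 0 \<and> (\<forall>x\<in>X. v x > 0) \<and> (\<forall>x\<in>X. Kf X K v x = g * v x)"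
    using pos_eig[OF fin sym pos bound, of u] u unfolding v_def by (simp add: fun_eq_iff)
  have simple: "\<exists>c. \<forall>x\<in>X. w x = c * v x" if w: "\<forall>x\<in>X. Kf X K w x = g * w x" for w
  proof -
    obtain x1 where x1: "x1 \<in> X" using ne by auto
    define c where "c = w x1 / v x1"
    define z where "z x = w x - c * v x" for x
    have Kz: "\<forall>x\<in>X. Kf X K z x = g * z x"
    proof
      fix x assume x: "x \<in> X"
      have "Kf X K z x = Kf X K w x - c * Kf X K v x"
        unfolding z_def Kf_def by (simp add: algebra_simps sum_subtractf sum_distrib_left)
      then show "Kf X K z x = g * z x" using w pe x by (simp add: z_def algebra_simps)
    qed
    have z1: "z x1 = 0" using pe x1 by (auto simp: z_def c_def)
    have "Nf X z = 0"
    proof (rule ccontr)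
      assume "Nf X z \<noteq> 0"
      then have "Nf X z > 0" unfolding Nf_def by (metis sum_nonneg zero_le_power2 order_le_less)
      from pos_eig[OF fin sym pos bound Qf_eig[OF Kz] this] have "\<bar>z x1\<bar> > 0" using x1 by blast
      then show False using z1 by simp
    qed
    then have "\<forall>x\<in>X. z x = 0" using Nf_zero_imp[OF fin] by blast
    then show ?thesis unfolding z_def by auto
  qed
  show ?thesis using pe bound simple by blast
qed



lemma has_sum_diff':
  fixes f g :: "'a \<Rightarrow> real"
  assumes "(f has_sum a) A" "(g has_sum b) A"
  shows "((\<lambda>x. f x - g x) has_sum (a - b)) A"
  using has_sum_add[OF assms(1) has_sum_cmult_right[OF assms(2), of "-1"]] by simp

lemma has_sum_finsum:
  fixes f :: "'i \<Rightarrow> 'a \<Rightarrow> real"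
  assumes "finite I" "\<And>i. i \<in> I \<Longrightarrow> (f i has_sum s i) A"
  shows "((\<lambda>x. \<Sum>i\<in>I. f i x) has_sum (\<Sum>i\<in>I. s i)) A"
  using assms by (induction I rule: finite_induct) (auto intro: has_sum_add)

lemma has_sum_shift:
  fixes f :: "'a::ab_group_add \<Rightarrow> real"
  shows "((\<lambda>x. f (x - y)) has_sum S) UNIV \<longleftrightarrow> (f has_sum S) UNIV"
proof -
  have "bij_betw (\<lambda>x. x - y) UNIV UNIV"
    by (rule bij_betwI[of _ _ _ "\<lambda>x. x + y"]) auto
  then show ?thesis by (rule has_sum_reindex_bij_betw)
qed

lemma has_sum_shift2:
  fixes f :: "'a::ab_group_add \<Rightarrow> real"
  shows "((\<lambda>y. f (x - y)) has_sum S) UNIV \<longleftrightarrow> (f has_sum S) UNIV"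
proof -
  have "bij_betw (\<lambda>y. x - y) UNIV UNIV"
    by (rule bij_betwI[of _ _ _ "\<lambda>y. x - y"]) auto
  then show ?thesis by (rule has_sum_reindex_bij_betw)
qed

lemma conv_has_sum:
  fixes f g :: "'a::ab_group_add \<Rightarrow> real"
  assumes f0: "\<And>x. f x \<ge> 0" and g0: "\<And>x. g x \<ge> 0"
    and fs: "(f has_sum F) UNIV" and gs: "(g has_sum H) UNIV"
  shows "\<And>x. (\<lambda>y. f (x - y) * g y) summable_on UNIV"
    and "((\<lambda>x. \<Sum>\<^sub>\<infinity>y. f (x - y) * g y) has_sum (F * H)) UNIV"
proof -
  define h where "h = (\<lambda>(y, x). f (x - y) * g y)"
  have inner: "((\<lambda>x. h (y, x)) has_sum (F * g y)) UNIV" for y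
    unfolding h_def using has_sum_cmult_left[OF fs[folded has_sum_shift[of f y]], of "g y"]
    by (simp add: mult_ac)
  have outer: "((\<lambda>y. F * g y) has_sum (F * H)) UNIV"
    by (rule has_sum_cmult_right[OF gs])
  have "h summable_on Sigma UNIV (\<lambda>_. UNIV)"
    by (rule summable_on_SigmaI[OF inner has_sum_imp_summable[OF outer]])
       (auto simp: h_def f0 g0)
  then have "(h has_sum (F * H)) (UNIV \<times> UNIV)"
    using has_sum_SigmaI[OF inner outer] by simp
  then have hs: "((\<lambda>(x, y). f (x - y) * g y) has_sum (F * H)) (UNIV \<times> UNIV)"
    by (subst has_sum_swap) (simp add: h_def case_prod_unfold)
  show sx: "(\<lambda>y. f (x - y) * g y) summable_on UNIV" for x
    using summable_on_SigmaD1[OF has_sum_imp_summable[OF hs]] by simp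
  show "((\<lambda>x. \<Sum>\<^sub>\<infinity>y. f (x - y) * g y) has_sum (F * H)) UNIV"
    by (rule has_sum_Sigma'[OF hs]) (use sx in auto)
qed

lemma tonelli:
  fixes h :: "'a \<Rightarrow> 'b \<Rightarrow> real"
  assumes h0: "\<And>x y. h x y \<ge> 0"
    and inner: "\<And>x. ((\<lambda>y. h x y) has_sum s x) UNIV" and outer: "(s has_sum S) UNIV"
  shows "\<And>y. (\<lambda>x. h x y) summable_on UNIV"
    and "((\<lambda>y. \<Sum>\<^sub>\<infinity>x. h x y) has_sum S) UNIV"
proof -
  define h' where "h' = (\<lambda>(x, y). h x y)"
  have inner': "((\<lambda>y. h' (x, y)) has_sum s x) UNIV" for x using inner by (simp add: h'_def)
  have "h' summable_on Sigma UNIV (\<lambda>_. UNIV)"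
    by (rule summable_on_SigmaI[OF inner' has_sum_imp_summable[OF outer]]) (auto simp: h'_def h0)
  then have "(h' has_sum S) (UNIV \<times> UNIV)"
    using has_sum_SigmaI[OF inner' outer] by simp
  then have hs: "((\<lambda>(y, x). h x y) has_sum S) (UNIV \<times> UNIV)"
    by (subst has_sum_swap) (simp add: h'_def case_prod_unfold)
  show sx: "(\<lambda>x. h x y) summable_on UNIV" for y
    using summable_on_SigmaD1[OF has_sum_imp_summable[OF hs]] by simp
  show "((\<lambda>y. \<Sum>\<^sub>\<infinity>x. h x y) has_sum S) UNIV"
    by (rule has_sum_Sigma'[OF hs]) (use sx in auto)
qed

lemma single_le_has_sum:
  fixes f :: "'a \<Rightarrow> real"
  assumes "(f has_sum S) UNIV" "\<And>x. f x \<ge> 0"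
  shows "f x \<le> S"
  using finite_sum_le_has_sum[OF assms(1), of "{x}"] assms(2) by simp

lemma exists_max_abs:
  fixes w :: "'a \<Rightarrow> real"
  assumes "(\<lambda>x. (w x)^2) summable_on UNIV"
  shows "\<exists>x0. \<forall>x. \<bar>w x\<bar> \<le> \<bar>w x0\<bar>"
proof (cases "\<forall>x. w x = 0")
  case True then show ?thesis by auto
next
  case False
  then obtain x1 where x1: "w x1 \<noteq> 0" by auto
  define e where "e = (w x1)^2"
  have e: "e > 0" using x1 by (simp add: e_def)
  define T where "T = {x. (w x)^2 \<ge> e}"
  obtain S where S: "((\<lambda>x. (w x)^2) has_sum S) UNIV" using assms summable_on_def by blast
  have "finite T"
  proof (rule ccontr)
    assume "infinite T"
    obtain n :: nat where n: "real n * e > S"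
      using reals_Archimedean3[OF e] by blast
    obtain F where F: "F \<subseteq> T" "finite F" "card F = n"
      using infinite_arbitrarily_large[OF \<open>infinite T\<close>] by blast
    have "real n * e = (\<Sum>x\<in>F. e)" using F by simp
    also have "\<dots> \<le> (\<Sum>x\<in>F. (w x)^2)" using F by (intro sum_mono) (auto simp: T_def)
    also have "\<dots> \<le> S" using finite_sum_le_has_sum[OF S F(2)] by simp
    finally show False using n by simp
  qed
  have "x1 \<in> T" by (simp add: T_def e_def)
  define m where "m = Max ((\<lambda>x. (w x)^2) ` T)"
  have "m \<in> (\<lambda>x. (w x)^2) ` T" unfolding m_def using \<open>finite T\<close> \<open>x1 \<in> T\<close> by (intro Max_in) auto
  then obtain x0 where x0: "x0 \<in> T" "m = (w x0)^2" by auto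
  have "(w x)^2 \<le> (w x0)^2" for x
  proof (cases "x \<in> T")
    case True then show ?thesis using x0 \<open>finite T\<close> unfolding m_def by (metis Max_ge finite_imageI imageI)
  next
    case False then show ?thesis using x0(1) by (auto simp: T_def)
  qed
  then show ?thesis by (metis abs_le_square_iff)
qed

locale walk =
  fixes a :: "int ^ 'd \<Rightarrow> real"
  assumes wk: "walk_kernel a"
begin

definition c :: real where "c = - a 0"
definition p :: "int ^ 'd \<Rightarrow> real" where "p z = a z + (if z = 0 then c else 0)"

lemma c_pos: "c > 0" using wk by (simp add: walk_kernel_def c_def)

lemma p_nonneg: "p z \<ge> 0"
  using wk by (cases "z = 0") (auto simp: walk_kernel_def p_def c_def)

lemma p_sym: "p (- z) = p z"
  using wk by (auto simp: walk_kernel_def p_def)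

lemma a_sym: "a (- z) = a z"
  using wk by (auto simp: walk_kernel_def)

lemma p_has_sum: "(p has_sum c) UNIV"
proof -
  have a0: "(a has_sum 0) UNIV" using wk by (simp add: walk_kernel_def)
  have "((\<lambda>z. if z = 0 then c else 0) has_sum c) UNIV"
    by (rule has_sum_finite_neutralI[of "{0}"]) auto
  from has_sum_add[OF a0 this] show ?thesis by (simp add: p_def[abs_def])
qed

lemma a_eq: "a z = p z - (if z = 0 then c else 0)" by (simp add: p_def)

lemma a_abs_summable: "(\<lambda>z. \<bar>a z\<bar>) summable_on UNIV"
proof -
  have "a summable_on UNIV" using wk by (auto simp: walk_kernel_def summable_on_def)
  then show ?thesis using summable_on_iff_abs_summable_on_real by auto
qed

primrec pn :: "nat \<Rightarrow> int ^ 'd \<Rightarrow> real" where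
  "pn 0 = (\<lambda>z. if z = 0 then 1 else 0)"
| "pn (Suc n) = (\<lambda>x. \<Sum>\<^sub>\<infinity>y. p (x - y) * pn n y)"

lemma pn_facts: "(\<forall>x. pn n x \<ge> 0) \<and> (pn n has_sum c ^ n) UNIV"
proof (induction n)
  case 0
  have "(pn 0 has_sum 1) UNIV"
    by (simp, rule has_sum_finite_neutralI[of "{0}"]) auto
  then show ?case by simp
next
  case (Suc n)
  have inner: "((\<lambda>x. p (x - y) * pn n y) has_sum (c * pn n y)) UNIV" for y
    using has_sum_cmult_left[OF p_has_sum[folded has_sum_shift[of p y]], of "pn n y"] by (simp add: mult_ac)
  have outer: "((\<lambda>y. c * pn n y) has_sum (c * c ^ n)) UNIV"
    using has_sum_cmult_right[OF conjunct2[OF Suc.IH], of c] by simp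
  have "((\<lambda>x. \<Sum>\<^sub>\<infinity>y. p (x - y) * pn n y) has_sum (c * c ^ n)) UNIV"
    by (rule tonelli(2)[OF _ inner outer]) (use Suc p_nonneg in simp)
  moreover have "\<forall>x. pn (Suc n) x \<ge> 0"
    using Suc p_nonneg by (auto intro!: infsum_nonneg)
  ultimately show ?case by simp
qed

lemma pn_nonneg: "pn n x \<ge> 0" using pn_facts by blast
lemma pn_has_sum: "(pn n has_sum c ^ n) UNIV" using pn_facts by blast

lemma conv_p:
  fixes g :: "int ^ 'd \<Rightarrow> real"
  assumes g0: "\<And>x. g x \<ge> 0" and gs: "(g has_sum H) UNIV"
  shows "\<And>x. (\<lambda>y. p (x - y) * g y) summable_on UNIV"
    and "((\<lambda>x. \<Sum>\<^sub>\<infinity>y. p (x - y) * g y) has_sum (c * H)) UNIV"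
proof -
  have inner: "((\<lambda>x. p (x - y) * g y) has_sum (c * g y)) UNIV" for y
    using has_sum_cmult_left[OF p_has_sum[folded has_sum_shift[of p y]], of "g y"] by (simp add: mult_ac)
  have outer: "((\<lambda>y. c * g y) has_sum (c * H)) UNIV"
    using has_sum_cmult_right[OF gs, of c] by simp
  show "(\<lambda>y. p (x - y) * g y) summable_on UNIV" for x
    by (rule tonelli(1)[OF _ inner outer]) (use g0 p_nonneg in simp)
  show "((\<lambda>x. \<Sum>\<^sub>\<infinity>y. p (x - y) * g y) has_sum (c * H)) UNIV"
    by (rule tonelli(2)[OF _ inner outer]) (use g0 p_nonneg in simp)
qed

lemma pn_conv_summable: "(\<lambda>y. p (x - y) * pn n y) summable_on UNIV"
  by (rule conv_p(1)[OF pn_nonneg pn_has_sum])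

lemma pn_le: "pn n x \<le> c ^ n"
  by (rule single_le_has_sum[OF pn_has_sum pn_nonneg])

lemma pn_sym: "pn n (- x) = pn n x"
proof (induction n arbitrary: x)
  case 0 then show ?case by auto
next
  case (Suc n)
  have bij: "bij_betw uminus (UNIV :: (int ^ 'd) set) UNIV"
    by (rule bij_betwI[of _ _ _ uminus]) auto
  have "pn (Suc n) (- x) = (\<Sum>\<^sub>\<infinity>y. p (- x - y) * pn n y)" by simp
  also have "\<dots> = (\<Sum>\<^sub>\<infinity>y. p (- x - (- y)) * pn n (- y))"
    by (rule infsum_reindex_bij_betw[OF bij, symmetric])
  also have "\<dots> = (\<Sum>\<^sub>\<infinity>y. p (x - y) * pn n y)"
  proof (rule infsum_cong)
    fix y
    have "p (- x - (- y)) = p (x - y)" using p_sym[of "x - y"] by (simp add: algebra_simps)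
    then show "p (- x - (- y)) * pn n (- y) = p (x - y) * pn n y" using Suc by simp
  qed
  finally show ?case by simp
qed

lemma pn_step_ge: "pn (Suc n) x \<ge> p (x - y) * pn n y"
proof -
  have "((\<lambda>y. p (x - y) * pn n y) has_sum pn (Suc n) x) UNIV"
    using pn_conv_summable by (simp add: summable_iff_has_sum_infsum)
  then show ?thesis by (rule single_le_has_sum) (simp add: p_nonneg pn_nonneg)
qed

lemma pn_pos: "\<exists>n. pn n z > 0"
proof -
  obtain zs where zs: "\<forall>w\<in>set zs. a w \<noteq> 0" "sum_list zs = z"
    using wk unfolding walk_kernel_def by blast
  have "\<forall>w\<in>set zs. a w \<noteq> 0 \<Longrightarrow> \<exists>n. pn n (sum_list zs) > 0"
  proof (induction zs)
    case Nil then show ?case by (intro exI[of _ 0]) simp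
  next
    case (Cons w zs)
    then obtain n where n: "pn n (sum_list zs) > 0" by auto
    show ?case
    proof (cases "w = 0")
      case True then show ?thesis using n by auto
    next
      case False
      then have "a w > 0" using Cons.prems wk by (auto simp: walk_kernel_def order_le_less)
      then have pw: "p w > 0" using False by (simp add: p_def)
      have "0 < p w * pn n (sum_list zs)" using pw n by simp
      also have "\<dots> \<le> pn (Suc n) (sum_list (w # zs))"
        using pn_step_ge[of "sum_list (w # zs)" "sum_list zs" n] by simp
      finally show ?thesis by blast
    qed
  qed
  then show ?thesis using zs by auto
qed

definition G :: "real \<Rightarrow> int ^ 'd \<Rightarrow> real" where
  "G l x = (\<Sum>\<^sub>\<infinity>n. pn n x / (l + c) ^ Suc n)"

lemma geo_has_sum:
  assumes l: "l > 0"
  shows "((\<lambda>n. c ^ n / (l + c) ^ Suc n) has_sum 1 / l) UNIV"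
proof -
  define r where "r = c / (l + c)"
  have r: "norm r < 1" using l c_pos by (simp add: r_def)
  have "(\<lambda>n. r ^ n * (1 / (l + c))) sums (1 / (1 - r) * (1 / (l + c)))"
    by (rule sums_mult2[OF geometric_sums[OF r]])
  moreover have "1 / (1 - r) * (1 / (l + c)) = 1 / l"
    using l c_pos by (simp add: r_def field_simps)
  moreover have "r ^ n * (1 / (l + c)) = c ^ n / (l + c) ^ Suc n" for n
    by (simp add: r_def power_divide)
  ultimately have "(\<lambda>n. c ^ n / (l + c) ^ Suc n) sums (1 / l)" by simp
  then show ?thesis by (rule sums_nonneg_imp_has_sum) (use l c_pos in simp)
qed

lemma Gterm_has_sum:
  assumes l: "l > 0"
  shows "((\<lambda>n. pn n x / (l + c) ^ Suc n) has_sum G l x) UNIV"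
proof -
  have "(\<lambda>n. pn n x / (l + c) ^ Suc n) summable_on UNIV"
    by (rule summable_on_comparison_test[OF has_sum_imp_summable[OF geo_has_sum[OF l]]])
       (use l c_pos pn_le pn_nonneg in \<open>auto intro: divide_right_mono\<close>)
  then show ?thesis by (simp add: G_def summable_iff_has_sum_infsum)
qed

lemma G_has_sum:
  assumes l: "l > 0"
  shows "(G l has_sum 1 / l) UNIV"
proof -
  have inner: "((\<lambda>x. pn n x / (l + c) ^ Suc n) has_sum c ^ n / (l + c) ^ Suc n) UNIV" for n
    using has_sum_cmult_left[OF pn_has_sum, of n "1 / (l + c) ^ Suc n"] by simp
  have "((\<lambda>x. \<Sum>\<^sub>\<infinity>n. pn n x / (l + c) ^ Suc n) has_sum 1 / l) UNIV"
    by (rule tonelli(2)[OF _ inner geo_has_sum[OF l]]) (use l c_pos pn_nonneg in simp)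
  then show ?thesis by (simp add: G_def[abs_def])
qed

lemma G_nonneg: "l > 0 \<Longrightarrow> G l x \<ge> 0"
  unfolding G_def by (rule infsum_nonneg) (use c_pos pn_nonneg in simp)

lemma G_le: "l > 0 \<Longrightarrow> G l x \<le> 1 / l"
  by (rule single_le_has_sum[OF G_has_sum]) (auto simp: G_nonneg)

lemma G_sym: "G l (- x) = G l x"
  unfolding G_def by (simp add: pn_sym)

lemma G_pos:
  assumes l: "l > 0"
  shows "G l x > 0"
proof -
  obtain n where n: "pn n x > 0" using pn_pos by blast
  show ?thesis
    by (rule has_sum_strict_mono[OF has_sum_0 Gterm_has_sum[OF l] _ UNIV_I[of n]])
       (use l c_pos n pn_nonneg in auto)
qed

lemma G_l2: "l > 0 \<Longrightarrow> (\<lambda>x. (G l x)^2) summable_on UNIV"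
proof -
  assume l: "l > 0"
  show ?thesis
  proof (rule summable_on_comparison_test[OF summable_on_cmult_left[OF has_sum_imp_summable[OF G_has_sum[OF l]], of "1/l"]])
    fix x
    have "G l x * G l x \<le> G l x * (1/l)" using G_le[OF l] G_nonneg[OF l] by (intro mult_left_mono) auto
    then show "(G l x)^2 \<le> G l x * (1 / l)" by (simp add: power2_eq_square)
  qed simp
qed

lemma G_eq:
  assumes l: "l > 0"
  shows "((\<lambda>y. a (x - y) * G l y) has_sum (l * G l x - (if x = 0 then 1 else 0))) UNIV"
proof -
  define f where "f n = pn n x / (l + c) ^ Suc n" for n
  have fs: "f sums G l x" unfolding f_def by (rule has_sum_imp_sums[OF Gterm_has_sum[OF l]])
  then have "(\<lambda>n. f (Suc n)) sums (G l x - f 0)" using sums_Suc_iff by (metis diff_add_cancel)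
  then have "(\<lambda>n. (l + c) * f (Suc n)) sums ((l + c) * (G l x - f 0))" by (rule sums_mult)
  moreover have "(l + c) * (G l x - f 0) = (l + c) * G l x - pn 0 x"
    using l c_pos by (simp add: f_def field_simps)
  moreover have "(l + c) * f (Suc n) = pn (Suc n) x / (l + c) ^ Suc n" for n
  proof -
    have ne: "l + c \<noteq> 0" using l c_pos by simp
    have "(l + c) ^ Suc (Suc n) = (l + c) * (l + c) ^ Suc n" by (rule power_Suc)
    then show ?thesis unfolding f_def using ne by (simp del: pn.simps power_Suc)
  qed
  ultimately have "(\<lambda>n. pn (Suc n) x / (l + c) ^ Suc n) sums ((l + c) * G l x - pn 0 x)" by simp
  then have outer: "((\<lambda>n. pn (Suc n) x / (l + c) ^ Suc n) has_sum ((l + c) * G l x - pn 0 x)) UNIV"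
    by (rule sums_nonneg_imp_has_sum) (use l c_pos pn_nonneg in \<open>simp del: pn.simps\<close>)
  have inner: "((\<lambda>y. p (x - y) * (pn n y / (l + c) ^ Suc n)) has_sum pn (Suc n) x / (l + c) ^ Suc n) UNIV" for n
  proof -
    have "((\<lambda>y. p (x - y) * pn n y) has_sum pn (Suc n) x) UNIV"
      using pn_conv_summable by (simp add: summable_iff_has_sum_infsum)
    from has_sum_cmult_left[OF this, of "1 / (l + c) ^ Suc n"] show ?thesis by simp
  qed
  have "((\<lambda>y. \<Sum>\<^sub>\<infinity>n. p (x - y) * (pn n y / (l + c) ^ Suc n)) has_sum ((l + c) * G l x - pn 0 x)) UNIV"
    by (rule tonelli(2)[OF _ inner outer]) (use l c_pos pn_nonneg p_nonneg in simp)
  moreover have "(\<lambda>y. \<Sum>\<^sub>\<infinity>n. p (x - y) * (pn n y / (l + c) ^ Suc n)) = (\<lambda>y. p (x - y) * G l y)"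
    by (rule ext, simp only: G_def infsum_cmult_right')
  ultimately have pG: "((\<lambda>y. p (x - y) * G l y) has_sum ((l + c) * G l x - pn 0 x)) UNIV"
    by simp
  have cG: "((\<lambda>y. if y = x then c * G l y else 0) has_sum c * G l x) UNIV"
    by (rule has_sum_finite_neutralI[of "{x}"]) auto
  have eq1: "(\<lambda>y. p (x - y) * G l y - (if y = x then c * G l y else 0)) = (\<lambda>y. a (x - y) * G l y)"
    by (rule ext) (simp add: p_def algebra_simps)
  have eq2: "(l + c) * G l x - pn 0 x - c * G l x = l * G l x - (if x = 0 then 1 else 0)"
    by (simp add: algebra_simps)
  show ?thesis using has_sum_diff'[OF pG cG] unfolding eq1 eq2 .
qed

lemma G_mono:
  assumes l: "0 < l" and lm: "l \<le> m"
  shows "G m x \<le> G l x"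
proof (rule has_sum_mono[OF Gterm_has_sum Gterm_has_sum])
  show "0 < m" using l lm by simp
  show "0 < l" by fact
  fix n :: nat
  have "(l + c) ^ Suc n \<le> (m + c) ^ Suc n" using l lm c_pos by (intro power_mono) auto
  moreover have "0 < (m + c) ^ Suc n * (l + c) ^ Suc n" using l lm c_pos by simp
  ultimately show "pn n x / (m + c) ^ Suc n \<le> pn n x / (l + c) ^ Suc n"
    using pn_nonneg by (intro divide_left_mono) auto
qed

lemma G_strict0:
  assumes l: "0 < l" and lm: "l < m"
  shows "G m 0 < G l 0"
proof (rule has_sum_strict_mono[OF Gterm_has_sum Gterm_has_sum _ UNIV_I[of 0]])
  show "0 < m" using l lm by simp
  show "0 < l" by fact
  show "pn 0 0 / (m + c) ^ Suc 0 < pn 0 0 / (l + c) ^ Suc 0"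
    using l lm c_pos by (simp add: frac_less2)
  fix n :: nat
  have "(l + c) ^ Suc n \<le> (m + c) ^ Suc n" using l lm c_pos by (intro power_mono) auto
  moreover have "0 < (m + c) ^ Suc n * (l + c) ^ Suc n" using l lm c_pos by simp
  ultimately show "pn n 0 / (m + c) ^ Suc n \<le> pn n 0 / (l + c) ^ Suc n"
    using pn_nonneg by (intro divide_left_mono) auto
qed

lemma l2_add: "u \<in> l2 \<Longrightarrow> v \<in> l2 \<Longrightarrow> (\<lambda>x. u x + v x) \<in> l2"
proof -
  assume u: "u \<in> l2" and v: "v \<in> l2"
  have "(\<lambda>x. 2 * (u x)^2 + 2 * (v x)^2) summable_on UNIV"
    using u v unfolding l2_def by (intro summable_on_add summable_on_cmult_right) auto
  moreover have "(u x + v x)^2 \<le> 2 * (u x)^2 + 2 * (v x)^2" for x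
  proof -
    have "0 \<le> (u x - v x)^2" by simp
    then show ?thesis by (simp add: power2_eq_square algebra_simps)
  qed
  ultimately have "(\<lambda>x. (u x + v x)^2) summable_on UNIV"
    by (rule summable_on_comparison_test) auto
  then show ?thesis unfolding l2_def by simp
qed

lemma l2_scale: "u \<in> l2 \<Longrightarrow> (\<lambda>x. t * u x) \<in> l2"
  unfolding l2_def by (simp add: power_mult_distrib summable_on_cmult_right)

lemma l2_zero: "(\<lambda>x. 0) \<in> l2" unfolding l2_def by simp

lemma l2_sum: "finite I \<Longrightarrow> (\<And>i. i \<in> I \<Longrightarrow> f i \<in> l2) \<Longrightarrow> (\<lambda>x. \<Sum>i\<in>I. f i x) \<in> l2"
  by (induction I rule: finite_induct) (auto intro: l2_add l2_zero)

lemma l2_diff: "u \<in> l2 \<Longrightarrow> v \<in> l2 \<Longrightarrow> (\<lambda>x. u x - v x) \<in> l2"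
  using l2_add[of u "\<lambda>x. (-1) * v x"] l2_scale[of v "-1"] by simp

lemma G_shift_l2: "l > 0 \<Longrightarrow> (\<lambda>x. G l (x - y)) \<in> l2"
proof -
  assume l: "l > 0"
  have bij: "bij_betw (\<lambda>x. x - y) UNIV UNIV" by (rule bij_betwI[of _ _ _ "\<lambda>x. x + y"]) auto
  show ?thesis using G_l2[OF l] unfolding l2_def
    using summable_on_reindex_bij_betw[OF bij, of "\<lambda>x. (G l x)^2"] by simp
qed

lemma a_conv_summable:
  assumes u: "u \<in> l2"
  shows "(\<lambda>y. a (x - y) * u y) summable_on UNIV"
proof -
  obtain x0 where x0: "\<And>x. \<bar>u x\<bar> \<le> \<bar>u x0\<bar>" using exists_max_abs u unfolding l2_def by blast
  have bij: "bij_betw (\<lambda>y. x - y) UNIV UNIV" by (rule bij_betwI[of _ _ _ "\<lambda>y. x - y"]) auto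
  have "(\<lambda>y. \<bar>a (x - y)\<bar>) summable_on UNIV"
    using summable_on_reindex_bij_betw[OF bij, of "\<lambda>z. \<bar>a z\<bar>"] a_abs_summable by simp
  then have "(\<lambda>y. \<bar>a (x - y)\<bar> * \<bar>u x0\<bar>) summable_on UNIV" by (rule summable_on_cmult_left)
  moreover have "norm (a (x - y) * u y) \<le> \<bar>a (x - y)\<bar> * \<bar>u x0\<bar>" for y
    by (simp add: abs_mult mult_left_mono x0)
  ultimately have "(\<lambda>y. norm (a (x - y) * u y)) summable_on UNIV"
    by (rule summable_on_comparison_test) auto
  then show ?thesis using summable_on_iff_abs_summable_on_real by blast
qed

lemma maxp_core:
  assumes w: "w \<in> l2" and l: "l > 0"
    and eq: "\<And>x. ((\<lambda>y. a (x - y) * w y) has_sum (l * w x + f x)) UNIV"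
  shows "\<exists>x0. (\<forall>x. \<bar>w x\<bar> \<le> \<bar>w x0\<bar>) \<and> l * (w x0)^2 \<le> - (f x0 * w x0)"
proof -
  obtain x0 where x0: "\<And>x. \<bar>w x\<bar> \<le> \<bar>w x0\<bar>" using exists_max_abs w unfolding l2_def by blast
  have cw: "((\<lambda>y. if y = x0 then c * w y else 0) has_sum c * w x0) UNIV"
    by (rule has_sum_finite_neutralI[of "{x0}"]) auto
  have eqf: "(\<lambda>y. a (x0 - y) * w y + (if y = x0 then c * w y else 0)) = (\<lambda>y. p (x0 - y) * w y)"
    by (rule ext) (simp add: p_def algebra_simps)
  have ps: "((\<lambda>y. p (x0 - y) * w y) has_sum (l * w x0 + f x0 + c * w x0)) UNIV"
    using has_sum_add[OF eq[of x0] cw] unfolding eqf .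
  have ps2: "((\<lambda>y. p (x0 - y) * w y * w x0) has_sum ((l * w x0 + f x0 + c * w x0) * w x0)) UNIV"
    by (rule has_sum_cmult_left[OF ps])
  have pc: "((\<lambda>y. p (x0 - y) * (w x0)^2) has_sum (c * (w x0)^2)) UNIV"
    using has_sum_cmult_left[OF p_has_sum[folded has_sum_shift2[of p x0]], of "(w x0)^2"] .
  have "(l * w x0 + f x0 + c * w x0) * w x0 \<le> c * (w x0)^2"
  proof (rule has_sum_mono[OF ps2 pc])
    fix y
    have "w y * w x0 \<le> \<bar>w y\<bar> * \<bar>w x0\<bar>" by (metis abs_ge_self abs_mult)
    also have "\<dots> \<le> \<bar>w x0\<bar> * \<bar>w x0\<bar>" by (intro mult_right_mono x0) auto
    also have "\<dots> = (w x0)^2" by (simp add: power2_eq_square)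
    finally have "w y * w x0 \<le> (w x0)^2" .
    then show "p (x0 - y) * w y * w x0 \<le> p (x0 - y) * (w x0)^2"
      using p_nonneg by (simp add: mult.assoc mult_left_mono)
  qed
  then have "l * (w x0)^2 \<le> - (f x0 * w x0)" by (simp add: algebra_simps power2_eq_square)
  then show ?thesis using x0 by blast
qed

lemma maxp_zero:
  assumes w: "w \<in> l2" and l: "l > 0"
    and eq: "\<And>x. ((\<lambda>y. a (x - y) * w y) has_sum (l * w x + f x)) UNIV"
    and f: "\<And>x. f x * w x \<ge> 0"
  shows "w x = 0"
proof -
  obtain x0 where x0: "\<forall>x. \<bar>w x\<bar> \<le> \<bar>w x0\<bar>" "l * (w x0)^2 \<le> - (f x0 * w x0)"
    using maxp_core[OF w l eq] by blast
  have "l * (w x0)^2 \<le> 0" using x0(2) f[of x0] by simp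
  then have "w x0 = 0" using l by (simp add: mult_le_0_iff)
  then show ?thesis using x0(1)[rule_format, of x] by simp
qed

lemma maxp_bound:
  assumes w: "w \<in> l2" and l: "l > 0"
    and eq: "\<And>x. ((\<lambda>y. a (x - y) * w y) has_sum (l * w x + f x)) UNIV"
    and f: "\<And>x. \<bar>f x\<bar> \<le> F"
  shows "\<bar>w x\<bar> \<le> F / l"
proof -
  obtain x0 where x0: "\<forall>x. \<bar>w x\<bar> \<le> \<bar>w x0\<bar>" "l * (w x0)^2 \<le> - (f x0 * w x0)"
    using maxp_core[OF w l eq] by blast
  have "- (f x0 * w x0) \<le> \<bar>f x0 * w x0\<bar>" by (rule abs_ge_minus_self)
  also have "\<dots> = \<bar>f x0\<bar> * \<bar>w x0\<bar>" by (rule abs_mult)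
  also have "\<dots> \<le> F * \<bar>w x0\<bar>" by (rule mult_right_mono[OF f]) simp
  finally have A: "- (f x0 * w x0) \<le> F * \<bar>w x0\<bar>" .
  have sq: "(w x0)^2 = \<bar>w x0\<bar> * \<bar>w x0\<bar>" by (simp add: power2_eq_square abs_mult_self_eq)
  have B: "(l * \<bar>w x0\<bar>) * \<bar>w x0\<bar> \<le> F * \<bar>w x0\<bar>" using x0(2) A unfolding sq by (simp add: mult.assoc)
  have F0: "F \<ge> 0" using f[of x0] by simp
  have "\<bar>w x0\<bar> \<le> F / l"
  proof (cases "w x0 = 0")
    case True then show ?thesis using F0 l by simp
  next
    case False
    then have "l * \<bar>w x0\<bar> \<le> F" using B by simp
    then show ?thesis using l by (simp add: pos_le_divide_eq mult.commute)
  qed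
  then show ?thesis using x0(1) order_trans by blast
qed

lemma G_lip:
  assumes l: "l > 0" and m: "m > 0"
  shows "\<bar>G l x - G m x\<bar> \<le> \<bar>l - m\<bar> / (l * m)"
proof -
  define w where "w y = G l y - G m y" for y
  have wl2: "w \<in> l2" unfolding w_def using G_l2[OF l] G_l2[OF m]
    by (intro l2_diff) (auto simp: l2_def)
  have eq: "((\<lambda>y. a (x - y) * w y) has_sum (l * w x + (l - m) * G m x)) UNIV" for x
  proof -
    have "((\<lambda>y. a (x - y) * G l y - a (x - y) * G m y) has_sum
         ((l * G l x - (if x = 0 then 1 else 0)) - (m * G m x - (if x = 0 then 1 else 0)))) UNIV"
      by (rule has_sum_diff'[OF G_eq[OF l] G_eq[OF m]])
    then show ?thesis unfolding w_def by (simp add: algebra_simps)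
  qed
  have "\<bar>(l - m) * G m y\<bar> \<le> \<bar>l - m\<bar> / m" for y
    using G_le[OF m] G_nonneg[OF m] by (simp add: abs_mult divide_inverse mult_left_mono)
  from maxp_bound[OF wl2 l eq this, of x] show ?thesis
    using l m by (simp add: w_def field_simps)
qed

end



lemma Qf_diff_bound:
  assumes fin: "finite X" and d: "\<forall>x\<in>X. \<forall>y\<in>X. \<bar>K1 x y - K2 x y\<bar> \<le> d"
  shows "Qf X K1 v \<le> Qf X K2 v + d * real (card X) * Nf X v"
proof -
  have d0: "d \<ge> 0" if ne: "X \<noteq> {}"
  proof -
    obtain x where "x \<in> X" using ne by auto
    then have "\<bar>K1 x x - K2 x x\<bar> \<le> d" using d by auto
    then show ?thesis by linarith
  qed
  have "Qf X K1 v - Qf X K2 v = (\<Sum>x\<in>X. \<Sum>y\<in>X. v x * (K1 x y - K2 x y) * v y)"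
    unfolding Qf_def sum_subtractf[symmetric] by (simp add: right_diff_distrib left_diff_distrib)
  also have "\<dots> \<le> (\<Sum>x\<in>X. \<Sum>y\<in>X. d * ((v x)^2 + (v y)^2) / 2)"
  proof (intro sum_mono)
    fix x y assume xy: "x \<in> X" "y \<in> X"
    have "v x * (K1 x y - K2 x y) * v y \<le> \<bar>v x * (K1 x y - K2 x y) * v y\<bar>" by (rule abs_ge_self)
    also have "\<dots> = \<bar>v x\<bar> * \<bar>v y\<bar> * \<bar>K1 x y - K2 x y\<bar>" by (simp add: abs_mult mult_ac)
    also have "\<dots> \<le> \<bar>v x\<bar> * \<bar>v y\<bar> * d" using d xy by (intro mult_left_mono) auto
    also have "\<dots> \<le> d * ((v x)^2 + (v y)^2) / 2"
    proof -
      have "0 \<le> (\<bar>v x\<bar> - \<bar>v y\<bar>)^2" by simp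
      then have "\<bar>v x\<bar> * \<bar>v y\<bar> \<le> ((v x)^2 + (v y)^2) / 2" by (simp add: power2_eq_square algebra_simps)
      moreover have "d \<ge> 0" using d0 xy by auto
      ultimately have "d * (\<bar>v x\<bar> * \<bar>v y\<bar>) \<le> d * (((v x)^2 + (v y)^2) / 2)" by (rule mult_left_mono)
      then show ?thesis by (simp add: mult_ac)
    qed
    finally show "v x * (K1 x y - K2 x y) * v y \<le> d * ((v x)^2 + (v y)^2) / 2" .
  qed
  also have "\<dots> = d * real (card X) * Nf X v"
  proof -
    have "(\<Sum>x\<in>X. \<Sum>y\<in>X. d * ((v x)^2 + (v y)^2) / 2) =
        (\<Sum>x\<in>X. \<Sum>y\<in>X. (d / 2) * (v x)^2 + (d / 2) * (v y)^2)"
      by (intro sum.cong refl) (simp add: algebra_simps)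
    also have "\<dots> = (\<Sum>x\<in>X. \<Sum>y\<in>X. (d / 2) * (v x)^2) + (\<Sum>x\<in>X. \<Sum>y\<in>X. (d / 2) * (v y)^2)"
      by (simp add: sum.distrib)
    also have "(\<Sum>x\<in>X. \<Sum>y\<in>X. (d / 2) * (v x)^2) = (d / 2) * real (card X) * Nf X v"
      unfolding Nf_def by (simp add: sum_distrib_left mult_ac)
    also have "(\<Sum>x\<in>X. \<Sum>y\<in>X. (d / 2) * (v y)^2) = (d / 2) * real (card X) * Nf X v"
    proof -
      have "(\<Sum>y\<in>X. (d / 2) * (v y)^2) = (d / 2) * Nf X v" unfolding Nf_def by (simp add: sum_distrib_left)
      then show ?thesis by simp
    qed
    also have "(d / 2) * real (card X) * Nf X v + (d / 2) * real (card X) * Nf X v = d * real (card X) * Nf X v"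
      by simp
    finally show ?thesis .
  qed
  finally show ?thesis by simp
qed

locale src = walk a for a :: "int ^ 'd \<Rightarrow> real" +
  fixes xs :: "(int ^ 'd) list"
  assumes dist: "distinct xs" and ne: "xs \<noteq> []"
begin

abbreviation X where "X \<equiv> set xs"

definition M :: "real \<Rightarrow> int ^ 'd \<Rightarrow> int ^ 'd \<Rightarrow> real" where
  "M l x y = G l (x - y)"

definition PP :: "real \<Rightarrow> real \<Rightarrow> (int ^ 'd \<Rightarrow> real) \<Rightarrow> bool" where
  "PP l g v \<longleftrightarrow> g > 0 \<and> (\<forall>x\<in>X. v x > 0) \<and> (\<forall>x\<in>X. Kf X (M l) v x = g * v x) \<and>
    (\<forall>w. Qf X (M l) w \<le> g * Nf X w) \<and>
    (\<forall>w. (\<forall>x\<in>X. Kf X (M l) w x = g * w x) \<longrightarrow> (\<exists>k. \<forall>x\<in>X. w x = k * v x))"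

definition gam :: "real \<Rightarrow> real" where "gam l = (SOME g. \<exists>v. PP l g v)"
definition pvec :: "real \<Rightarrow> int ^ 'd \<Rightarrow> real" where "pvec l = (SOME v. PP l (gam l) v)"

lemma finX: "finite X" by simp
lemma neX: "X \<noteq> {}" using ne by simp

lemma PP_gam:
  assumes l: "l > 0"
  shows "PP l (gam l) (pvec l)"
proof -
  have "\<exists>g v. PP l g v"
    unfolding PP_def
  proof (rule perron_sym[OF finX neX])
    show "\<forall>x\<in>X. \<forall>y\<in>X. M l x y = M l y x"
      unfolding M_def by (metis G_sym minus_diff_eq)
    show "\<forall>x\<in>X. \<forall>y\<in>X. M l x y > 0" unfolding M_def using G_pos[OF l] by auto
  qed
  then have "\<exists>v. PP l (gam l) v" unfolding gam_def by (rule someI_ex)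
  then show ?thesis unfolding pvec_def by (rule someI_ex)
qed

lemma opH_simp: "opH a xs \<beta> u x = opA a u x + \<beta> * (if x \<in> X then u x else 0)"
proof -
  have "(\<Sum>xi\<leftarrow>xs. (if x = xi then u xi else 0)) = (\<Sum>xi\<in>X. (if x = xi then u xi else 0))"
    by (rule sum_list_distinct_conv_sum_set[OF dist])
  also have "\<dots> = (if x \<in> X then u x else 0)" by (simp add: sum.delta)
  finally show ?thesis by (simp add: opH_def)
qed

lemma opA_has_sum: "u \<in> l2 \<Longrightarrow> ((\<lambda>y. a (x - y) * u y) has_sum opA a u x) UNIV"
  unfolding opA_def using a_conv_summable summable_iff_has_sum_infsum by blast

lemma Gsum_has_sum:
  assumes l: "l > 0"
  shows "((\<lambda>x'. a (x - x') * (\<Sum>y\<in>X. s y * G l (x' - y))) has_sum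
     (l * (\<Sum>y\<in>X. s y * G l (x - y)) - (if x \<in> X then s x else 0))) UNIV"
proof -
  have one: "((\<lambda>x'. a (x - x') * G l (x' - y)) has_sum (l * G l (x - y) - (if x = y then 1 else 0))) UNIV" for y
  proof -
    have "((\<lambda>z. a ((x - y) - z) * G l z) has_sum (l * G l (x - y) - (if x - y = 0 then 1 else 0))) UNIV"
      by (rule G_eq[OF l])
    then have "((\<lambda>x'. a ((x - y) - (x' - y)) * G l (x' - y)) has_sum (l * G l (x - y) - (if x - y = 0 then 1 else 0))) UNIV"
      by (subst has_sum_shift[of "\<lambda>z. a ((x - y) - z) * G l z" y])
    then show ?thesis by simp
  qed
  have "((\<lambda>x'. \<Sum>y\<in>X. s y * (a (x - x') * G l (x' - y))) has_sum
      (\<Sum>y\<in>X. s y * (l * G l (x - y) - (if x = y then 1 else 0)))) UNIV"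
    by (rule has_sum_finsum[OF finX]) (rule has_sum_cmult_right[OF one])
  moreover have "(\<lambda>x'. \<Sum>y\<in>X. s y * (a (x - x') * G l (x' - y))) = (\<lambda>x'. a (x - x') * (\<Sum>y\<in>X. s y * G l (x' - y)))"
    by (rule ext) (simp add: sum_distrib_left mult_ac)
  moreover have "(\<Sum>y\<in>X. s y * (l * G l (x - y) - (if x = y then 1 else 0))) =
      l * (\<Sum>y\<in>X. s y * G l (x - y)) - (if x \<in> X then s x else 0)"
    by (simp add: algebra_simps sum_subtractf sum_distrib_left sum.delta if_distrib[of "\<lambda>t. s _ * t"] cong: if_cong)
  ultimately show ?thesis by simp
qed

lemma Gsum_l2: "l > 0 \<Longrightarrow> (\<lambda>x. t * (\<Sum>y\<in>X. s y * G l (x - y))) \<in> l2"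
  by (intro l2_scale l2_sum finX) (auto intro: l2_scale G_shift_l2)

lemma E1:
  assumes mu: "\<mu> > 0" and u: "u \<in> eigenspace_H a xs \<beta> \<mu>"
  shows "\<forall>x. u x = \<beta> * (\<Sum>y\<in>X. u y * G \<mu> (x - y))"
    and "\<forall>x\<in>X. \<beta> * Kf X (M \<mu>) u x = u x"
proof -
  have ul2: "u \<in> l2" and ueq: "\<And>x. opH a xs \<beta> u x = \<mu> * u x"
    using u by (auto simp: eigenspace_H_def)
  have hu: "((\<lambda>y. a (x - y) * u y) has_sum (\<mu> * u x - \<beta> * (if x \<in> X then u x else 0))) UNIV" for x
  proof -
    have v: "opA a u x = \<mu> * u x - \<beta> * (if x \<in> X then u x else 0)"
      using ueq[of x] unfolding opH_simp by linarith
    show ?thesis using opA_has_sum[OF ul2, of x] unfolding v .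
  qed
  define W where "W x = \<beta> * (\<Sum>y\<in>X. u y * G \<mu> (x - y))" for x
  have hW: "((\<lambda>y. a (x - y) * W y) has_sum (\<mu> * W x - \<beta> * (if x \<in> X then u x else 0))) UNIV" for x
    using has_sum_cmult_right[OF Gsum_has_sum[OF mu, of x u], of \<beta>] unfolding W_def
    by (simp add: algebra_simps)
  define w where "w x = u x - W x" for x
  have wl2: "w \<in> l2" unfolding w_def W_def by (intro l2_diff ul2 Gsum_l2 mu)
  have hw: "((\<lambda>y. a (x - y) * w y) has_sum (\<mu> * w x + 0)) UNIV" for x
  proof -
    have e1: "(\<lambda>y. a (x - y) * w y) = (\<lambda>y. a (x - y) * u y - a (x - y) * W y)"
      by (rule ext) (simp add: w_def algebra_simps)
    have e2: "\<mu> * w x + 0 = (\<mu> * u x - \<beta> * (if x \<in> X then u x else 0)) - (\<mu> * W x - \<beta> * (if x \<in> X then u x else 0))"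
      by (simp add: w_def algebra_simps)
    show ?thesis unfolding e1 e2 by (rule has_sum_diff'[OF hu hW])
  qed
  have wz: "w x = 0" for x by (rule maxp_zero[OF wl2 mu hw]) simp
  show uW: "\<forall>x. u x = \<beta> * (\<Sum>y\<in>X. u y * G \<mu> (x - y))"
  proof
    fix x show "u x = \<beta> * (\<Sum>y\<in>X. u y * G \<mu> (x - y))" using wz[of x] unfolding w_def W_def by linarith
  qed
  show "\<forall>x\<in>X. \<beta> * Kf X (M \<mu>) u x = u x"
  proof
    fix x
    have k: "Kf X (M \<mu>) u x = (\<Sum>y\<in>X. u y * G \<mu> (x - y))"
      unfolding Kf_def M_def by (simp add: mult.commute)
    show "\<beta> * Kf X (M \<mu>) u x = u x" unfolding k using uW by metis
  qed
qed

lemma PP_gamD: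
  assumes "l > 0"
  shows "gam l > 0" "\<forall>x\<in>X. pvec l x > 0" "\<forall>x\<in>X. Kf X (M l) (pvec l) x = gam l * pvec l x"
    "\<And>w. Qf X (M l) w \<le> gam l * Nf X w"
    "\<And>w. (\<forall>x\<in>X. Kf X (M l) w x = gam l * w x) \<Longrightarrow> \<exists>k. \<forall>x\<in>X. w x = k * pvec l x"
  using PP_gam[OF assms] unfolding PP_def by blast+

lemma Nf_pos_vec: "l > 0 \<Longrightarrow> Nf X (pvec l) > 0"
proof -
  assume l: "l > 0"
  obtain x where x: "x \<in> X" using neX by (meson ex_in_conv)
  have "0 < pvec l x" using PP_gamD(2)[OF l] x by blast
  then have "0 < (pvec l x)^2" by simp
  also have "\<dots> \<le> Nf X (pvec l)" unfolding Nf_def using x by (intro member_le_sum) auto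
  finally show ?thesis .
qed

lemma gam_le_aux:
  assumes l: "l > 0" and m: "m > 0" and d: "\<forall>x\<in>X. \<forall>y\<in>X. \<bar>M m x y - M l x y\<bar> \<le> e"
  shows "gam m \<le> gam l + e * real (card X)"
proof -
  let ?v = "pvec m"
  have "gam m * Nf X ?v = Qf X (M m) ?v" using Qf_eig[OF PP_gamD(3)[OF m]] by simp
  also have "\<dots> \<le> Qf X (M l) ?v + e * real (card X) * Nf X ?v" by (rule Qf_diff_bound[OF finX d])
  also have "\<dots> \<le> gam l * Nf X ?v + e * real (card X) * Nf X ?v" using PP_gamD(4)[OF l] by simp
  finally have "gam m * Nf X ?v \<le> (gam l + e * real (card X)) * Nf X ?v" by (simp add: algebra_simps)
  then show ?thesis using Nf_pos_vec[OF m] by simp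
qed

lemma gam_lip:
  assumes l: "l > 0" and m: "m > 0"
  shows "\<bar>gam l - gam m\<bar> \<le> real (card X) * (\<bar>l - m\<bar> / (l * m))"
proof -
  have d1: "\<forall>x\<in>X. \<forall>y\<in>X. \<bar>M m x y - M l x y\<bar> \<le> \<bar>l - m\<bar> / (l * m)"
    unfolding M_def using G_lip[OF l m] by (metis abs_minus_commute)
  have d2: "\<forall>x\<in>X. \<forall>y\<in>X. \<bar>M l x y - M m x y\<bar> \<le> \<bar>l - m\<bar> / (l * m)"
    unfolding M_def using G_lip[OF l m] by metis
  show ?thesis using gam_le_aux[OF l m d1] gam_le_aux[OF m l d2] by (simp add: abs_le_iff mult_ac)
qed

lemma gam_bound:
  assumes l: "l > 0"
  shows "gam l \<le> real (card X) / l"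
proof -
  let ?v = "pvec l"
  have d: "\<forall>x\<in>X. \<forall>y\<in>X. \<bar>M l x y - 0\<bar> \<le> 1 / l"
    unfolding M_def using G_le[OF l] G_nonneg[OF l] by simp
  have "gam l * Nf X ?v = Qf X (M l) ?v" using Qf_eig[OF PP_gamD(3)[OF l]] by simp
  also have "\<dots> \<le> Qf X (\<lambda>_ _. 0) ?v + 1 / l * real (card X) * Nf X ?v"
    by (rule Qf_diff_bound[OF finX d])
  also have "Qf X (\<lambda>_ _. 0) ?v = 0" by (simp add: Qf_def)
  finally have H: "gam l * Nf X ?v \<le> 0 + 1 / l * real (card X) * Nf X ?v" .
  have "gam l * Nf X ?v \<le> (real (card X) / l) * Nf X ?v" using H by simp
  then show ?thesis by (rule mult_right_le_imp_le) (rule Nf_pos_vec[OF l])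
qed

lemma gam_strict:
  assumes l: "l > 0" and lm: "l < m"
  shows "gam m < gam l"
proof -
  have m: "m > 0" using l lm by simp
  let ?v = "pvec m"
  have vpos: "\<forall>x\<in>X. ?v x > 0" by (rule PP_gamD(2)[OF m])
  have "gam m * Nf X ?v = Qf X (M m) ?v" using Qf_eig[OF PP_gamD(3)[OF m]] by simp
  also have "\<dots> < Qf X (M l) ?v"
    unfolding Qf_def
  proof (rule sum_strict_mono_ex1[OF finX])
    have inner: "?v x * M m x y * ?v y \<le> ?v x * M l x y * ?v y" if "x \<in> X" "y \<in> X" for x y
      using vpos that G_mono[OF l less_imp_le[OF lm]] unfolding M_def
      by (intro mult_right_mono mult_left_mono) (auto simp: less_imp_le)
    show "\<forall>x\<in>X. (\<Sum>y\<in>X. ?v x * M m x y * ?v y) \<le> (\<Sum>y\<in>X. ?v x * M l x y * ?v y)"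
      using inner by (auto intro: sum_mono)
    obtain x where x: "x \<in> X" using neX by (meson ex_in_conv)
    have "(\<Sum>y\<in>X. ?v x * M m x y * ?v y) < (\<Sum>y\<in>X. ?v x * M l x y * ?v y)"
    proof (rule sum_strict_mono_ex1[OF finX])
      show "\<forall>y\<in>X. ?v x * M m x y * ?v y \<le> ?v x * M l x y * ?v y" using inner x by auto
      have "M m x x < M l x x" unfolding M_def using G_strict0[OF l lm] by simp
      then have "?v x * M m x x * ?v x < ?v x * M l x x * ?v x" using vpos x by simp
      then show "\<exists>y\<in>X. ?v x * M m x y * ?v y < ?v x * M l x y * ?v y" using x by blast
    qed
    then show "\<exists>x\<in>X. (\<Sum>y\<in>X. ?v x * M m x y * ?v y) < (\<Sum>y\<in>X. ?v x * M l x y * ?v y)" using x by blast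
  qed
  also have "\<dots> \<le> gam l * Nf X ?v" by (rule PP_gamD(4)[OF l])
  finally show ?thesis using Nf_pos_vec[OF m] by simp
qed

lemma gam_cont: "0 < r \<Longrightarrow> continuous_on {r..} gam"
proof -
  assume r: "r > 0"
  have "(real (card X) / r^2)-lipschitz_on {r..} gam"
  proof (rule lipschitz_onI)
    fix l m assume lm: "l \<in> {r..}" "m \<in> {r..}"
    then have l: "l \<ge> r" and m: "m \<ge> r" by auto
    have "\<bar>gam l - gam m\<bar> \<le> real (card X) * (\<bar>l - m\<bar> / (l * m))"
      by (rule gam_lip) (use l m r in auto)
    also have "\<dots> \<le> real (card X) * (\<bar>l - m\<bar> / r^2)"
    proof (intro mult_left_mono divide_left_mono)
      show "r^2 \<le> l * m" using l m r by (simp add: power2_eq_square mult_mono)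
    qed (use r l m in auto)
    finally show "dist (gam l) (gam m) \<le> real (card X) / r^2 * dist l m"
      by (simp add: dist_real_def)
  qed (use r in simp)
  then show ?thesis by (rule lipschitz_on_continuous_on)
qed

lemma eig_has_sum:
  assumes u: "u \<in> eigenspace_H a xs \<beta> \<mu>"
  shows "((\<lambda>y. a (x - y) * u y) has_sum (\<mu> * u x + (- \<beta> * (if x \<in> X then u x else 0)))) UNIV"
proof -
  have ul2: "u \<in> l2" and ueq: "opH a xs \<beta> u x = \<mu> * u x"
    using u by (auto simp: eigenspace_H_def)
  have v: "opA a u x = \<mu> * u x + (- \<beta> * (if x \<in> X then u x else 0))"
    using ueq unfolding opH_simp by linarith
  show ?thesis using opA_has_sum[OF ul2, of x] unfolding v .
qed

lemma E1pos:
  assumes mu: "\<mu> > 0" and u: "u \<in> eigenspace_H a xs \<beta> \<mu>" and nz: "u \<noteq> (\<lambda>_. 0)"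
  shows "\<beta> > 0 \<and> 1 / \<beta> \<le> gam \<mu>"
proof -
  have ul2: "u \<in> l2" using u by (auto simp: eigenspace_H_def)
  obtain x0 where x0: "u x0 \<noteq> 0" using nz by auto
  have bpos: "\<beta> > 0"
  proof (rule ccontr)
    assume "\<not> \<beta> > 0"
    then have b: "\<beta> \<le> 0" by simp
    have "u x0 = 0"
    proof (rule maxp_zero[OF ul2 mu eig_has_sum[OF u]])
      fix x
      have "0 \<le> u x * u x" by simp
      then have "\<beta> * (u x * u x) \<le> 0" using b by (simp add: mult_nonpos_nonneg)
      then show "- \<beta> * (if x \<in> X then u x else 0) * u x \<ge> 0"
        by (simp add: mult.assoc)
    qed
    then show False using x0 by simp
  qed
  have rep: "\<forall>x. u x = \<beta> * (\<Sum>y\<in>X. u y * G \<mu> (x - y))" by (rule E1(1)[OF mu u])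
  obtain x1 where x1: "x1 \<in> X" "u x1 \<noteq> 0"
  proof (rule ccontr)
    assume "\<not> thesis"
    then have z: "\<forall>y\<in>X. u y = 0" using that by blast
    have "u x0 = \<beta> * (\<Sum>y\<in>X. u y * G \<mu> (x0 - y))" using rep by blast
    also have "\<dots> = 0" using z by simp
    finally have "u x0 = 0" .
    then show False using x0 by simp
  qed
  have Np: "Nf X u > 0"
  proof -
    have "0 < (u x1)^2" using x1 by simp
    also have "\<dots> \<le> Nf X u" unfolding Nf_def using x1 by (intro member_le_sum) auto
    finally show ?thesis .
  qed
  have "\<forall>x\<in>X. Kf X (M \<mu>) u x = (1 / \<beta>) * u x"
  proof
    fix x assume x: "x \<in> X"
    have "\<beta> * Kf X (M \<mu>) u x = u x" using E1(2)[OF mu u] x by blast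
    then show "Kf X (M \<mu>) u x = (1 / \<beta>) * u x" using bpos by (simp add: field_simps)
  qed
  then have "Qf X (M \<mu>) u = (1 / \<beta>) * Nf X u" by (rule Qf_eig)
  then have "(1 / \<beta>) * Nf X u \<le> gam \<mu> * Nf X u" using PP_gamD(4)[OF mu, of u] by simp
  then have "1 / \<beta> \<le> gam \<mu>" by (rule mult_right_le_imp_le) (rule Np)
  then show ?thesis using bpos by simp
qed

lemma E2:
  assumes b: "\<beta> > 0" and mu: "\<mu> > 0" and g: "gam \<mu> = 1 / \<beta>"
  shows "is_simple_eigenvalue a xs \<beta> \<mu>"
proof -
  define v where "v = pvec \<mu>"
  define u0 where "u0 x = \<beta> * (\<Sum>y\<in>X. v y * G \<mu> (x - y))" for x
  have u0l2: "u0 \<in> l2" unfolding u0_def[abs_def] by (rule Gsum_l2[OF mu])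
  have Kv: "Kf X (M \<mu>) v x = (\<Sum>y\<in>X. v y * G \<mu> (x - y))" for x
    unfolding Kf_def M_def by (simp add: mult.commute)
  have u0X: "u0 x = v x" if x: "x \<in> X" for x
  proof -
    have "u0 x = \<beta> * Kf X (M \<mu>) v x" by (simp add: u0_def Kv)
    also have "\<dots> = \<beta> * (gam \<mu> * v x)" using PP_gamD(3)[OF mu] x by (simp add: v_def)
    finally show ?thesis using g b by simp
  qed
  have hs: "((\<lambda>y. a (x - y) * u0 y) has_sum (\<mu> * u0 x - \<beta> * (if x \<in> X then v x else 0))) UNIV" for x
  proof -
    have "((\<lambda>y. \<beta> * (a (x - y) * (\<Sum>z\<in>X. v z * G \<mu> (y - z)))) has_sum
        \<beta> * (\<mu> * (\<Sum>z\<in>X. v z * G \<mu> (x - z)) - (if x \<in> X then v x else 0))) UNIV"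
      by (rule has_sum_cmult_right[OF Gsum_has_sum[OF mu]])
    then show ?thesis unfolding u0_def by (simp add: algebra_simps)
  qed
  have opH0: "opH a xs \<beta> u0 = (\<lambda>x. \<mu> * u0 x)"
  proof
    fix x
    have "opA a u0 x = \<mu> * u0 x - \<beta> * (if x \<in> X then v x else 0)"
      unfolding opA_def by (rule infsumI[OF hs])
    then show "opH a xs \<beta> u0 x = \<mu> * u0 x" unfolding opH_simp using u0X by auto
  qed
  have u0E: "u0 \<in> eigenspace_H a xs \<beta> \<mu>" using u0l2 opH0 by (simp add: eigenspace_H_def)
  obtain x1 where x1: "x1 \<in> X" using neX by (meson ex_in_conv)
  have "u0 x1 > 0" using u0X[OF x1] PP_gamD(2)[OF mu] x1 by (simp add: v_def)
  then have nz: "u0 \<noteq> (\<lambda>_. 0)" by (metis less_irrefl)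
  have simple: "\<exists>k. w = (\<lambda>x. k * u0 x)" if w: "w \<in> eigenspace_H a xs \<beta> \<mu>" for w
  proof -
    have "\<forall>x\<in>X. Kf X (M \<mu>) w x = gam \<mu> * w x"
    proof
      fix x assume x: "x \<in> X"
      have "\<beta> * Kf X (M \<mu>) w x = w x" using E1(2)[OF mu w] x by blast
      then have "Kf X (M \<mu>) w x = (1 / \<beta>) * w x" using b by (simp add: field_simps)
      then show "Kf X (M \<mu>) w x = gam \<mu> * w x" using g by simp
    qed
    then obtain k where k: "\<forall>x\<in>X. w x = k * v x" using PP_gamD(5)[OF mu] unfolding v_def by blast
    have "w x = k * u0 x" for x
    proof -
      have "w x = \<beta> * (\<Sum>y\<in>X. w y * G \<mu> (x - y))" using E1(1)[OF mu w] by blast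
      also have "\<dots> = \<beta> * (\<Sum>y\<in>X. k * (v y * G \<mu> (x - y)))"
        using k by (intro arg_cong[where f = "\<lambda>t. \<beta> * t"] sum.cong) auto
      also have "\<dots> = k * u0 x" by (simp add: u0_def sum_distrib_left[symmetric] mult_ac)
      finally show ?thesis .
    qed
    then show ?thesis by (intro exI[of _ k] ext)
  qed
  show ?thesis unfolding is_simple_eigenvalue_def
  proof (rule bexI[OF _ u0E], intro conjI ballI)
    show "u0 \<noteq> (\<lambda>_. 0)" by (rule nz)
    fix w assume "w \<in> eigenspace_H a xs \<beta> \<mu>"
    then show "\<exists>c. w = (\<lambda>x. c * u0 x)" by (rule simple)
  qed
qed

lemma exists_root:
  assumes b: "\<beta> > 0" and m0: "\<mu>0 > 0" and le: "1 / \<beta> \<le> gam \<mu>0"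
  shows "\<exists>\<mu>\<ge>\<mu>0. gam \<mu> = 1 / \<beta>"
proof -
  define B where "B = \<mu>0 + real (card X) * \<beta> + 1"
  have cb: "real (card X) * \<beta> \<ge> 0" using b by simp
  have B: "\<mu>0 \<le> B" "B > 0" unfolding B_def using b m0 cb by linarith+
  have "gam B \<le> real (card X) / B" by (rule gam_bound[OF B(2)])
  also have "\<dots> \<le> 1 / \<beta>" using b B m0 by (simp add: field_simps B_def)
  finally have gB: "gam B \<le> 1 / \<beta>" .
  have "continuous_on {\<mu>0..B} gam"
    by (rule continuous_on_subset[OF gam_cont[OF m0]]) auto
  from IVT2'[of gam B "1 / \<beta>" \<mu>0, OF gB le B(1) this] show ?thesis by auto
qed

lemma haspos_iff: "has_pos_eigenvalue a xs \<beta> \<longleftrightarrow> \<beta> > 0 \<and> (\<exists>\<mu>>0. 1 / \<beta> \<le> gam \<mu>)"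
proof
  assume "has_pos_eigenvalue a xs \<beta>"
  then obtain \<mu> u where mu: "\<mu> > 0" and u: "u \<in> eigenspace_H a xs \<beta> \<mu>" "u \<noteq> (\<lambda>_. 0)"
    unfolding has_pos_eigenvalue_def is_eigenvalue_def by blast
  from E1pos[OF mu u] mu show "\<beta> > 0 \<and> (\<exists>\<mu>>0. 1 / \<beta> \<le> gam \<mu>)" by blast
next
  assume "\<beta> > 0 \<and> (\<exists>\<mu>>0. 1 / \<beta> \<le> gam \<mu>)"
  then obtain \<mu>0 where b: "\<beta> > 0" and m0: "\<mu>0 > 0" "1 / \<beta> \<le> gam \<mu>0" by blast
  obtain \<mu> where mu: "\<mu> \<ge> \<mu>0" "gam \<mu> = 1 / \<beta>" using exists_root[OF b m0] by blast
  have mup: "\<mu> > 0" using mu m0 by simp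
  have "is_simple_eigenvalue a xs \<beta> \<mu>" by (rule E2[OF b mup mu(2)])
  then have "is_eigenvalue a xs \<beta> \<mu>" unfolding is_simple_eigenvalue_def is_eigenvalue_def by blast
  then show "has_pos_eigenvalue a xs \<beta>" unfolding has_pos_eigenvalue_def using mup by blast
qed

definition Pos where "Pos = {\<beta>. has_pos_eigenvalue a xs \<beta>}"

lemma Pos_up: "\<beta> \<in> Pos \<Longrightarrow> \<beta> \<le> \<beta>' \<Longrightarrow> \<beta>' \<in> Pos"
proof -
  assume "\<beta> \<in> Pos" "\<beta> \<le> \<beta>'"
  then obtain \<mu> where b: "\<beta> > 0" "\<mu> > 0" "1 / \<beta> \<le> gam \<mu>" unfolding Pos_def haspos_iff by blast
  have "1 / \<beta>' \<le> 1 / \<beta>" using b \<open>\<beta> \<le> \<beta>'\<close> by (simp add: frac_le)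
  then show ?thesis using b \<open>\<beta> \<le> \<beta>'\<close> unfolding Pos_def haspos_iff by (auto intro!: exI[of _ \<mu>])
qed

lemma Pos_pos: "\<beta> \<in> Pos \<Longrightarrow> \<beta> > 0" unfolding Pos_def haspos_iff by blast

lemma Pos_gam: "\<mu> > 0 \<Longrightarrow> 1 / gam \<mu> \<in> Pos"
  unfolding Pos_def haspos_iff using PP_gamD(1) by auto

lemma Pos_open: "\<beta> \<in> Pos \<Longrightarrow> \<exists>\<beta>'<\<beta>. \<beta>' \<in> Pos"
proof -
  assume "\<beta> \<in> Pos"
  then obtain \<mu> where b: "\<beta> > 0" "\<mu> > 0" "1 / \<beta> \<le> gam \<mu>" unfolding Pos_def haspos_iff by blast
  have "gam \<mu> < gam (\<mu> / 2)" by (rule gam_strict) (use b in auto)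
  then have lt: "1 / \<beta> < gam (\<mu> / 2)" using b by simp
  have g2: "gam (\<mu> / 2) > 0" using PP_gamD(1) b by simp
  have "1 / gam (\<mu> / 2) < \<beta>" using lt b g2 by (simp add: field_simps)
  moreover have "1 / gam (\<mu> / 2) \<in> Pos" by (rule Pos_gam) (use b in simp)
  ultimately show ?thesis by blast
qed

definition bs where "bs = Inf Pos"

lemma Pos_ne: "Pos \<noteq> {}" using Pos_gam[of 1] by auto
lemma Pos_bdd: "bdd_below Pos" unfolding bdd_below_def using Pos_pos by (auto intro: less_imp_le)

lemma Pos_iff: "\<beta> \<in> Pos \<longleftrightarrow> bs < \<beta>"
proof
  assume "\<beta> \<in> Pos"
  then obtain \<beta>' where "\<beta>' < \<beta>" "\<beta>' \<in> Pos" using Pos_open by blast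
  then have "bs \<le> \<beta>'" unfolding bs_def by (intro cInf_lower Pos_bdd)
  then show "bs < \<beta>" using \<open>\<beta>' < \<beta>\<close> by simp
next
  assume "bs < \<beta>"
  then obtain \<beta>' where "\<beta>' \<in> Pos" "\<beta>' < \<beta>" unfolding bs_def using cInf_less_iff[OF Pos_ne Pos_bdd] by blast
  then show "\<beta> \<in> Pos" using Pos_up by (auto intro: less_imp_le)
qed

lemma beta_c_eq: "beta_c a xs = bs"
proof -
  have S: "{b. \<exists>\<epsilon>>0. \<forall>\<beta>. b < \<beta> \<and> \<beta> < b + \<epsilon> \<longrightarrow> has_pos_eigenvalue a xs \<beta>} = {bs..}"
  proof (intro set_eqI iffI)
    fix b assume "b \<in> {b. \<exists>\<epsilon>>0. \<forall>\<beta>. b < \<beta> \<and> \<beta> < b + \<epsilon> \<longrightarrow> has_pos_eigenvalue a xs \<beta>}"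
    then obtain e where e: "e > 0" "\<And>\<beta>. b < \<beta> \<Longrightarrow> \<beta> < b + e \<Longrightarrow> \<beta> \<in> Pos"
      unfolding Pos_def by blast
    show "b \<in> {bs..}"
    proof (rule ccontr)
      assume "b \<notin> {bs..}"
      then have bl: "b < bs" by simp
      define \<beta> where "\<beta> = min bs (b + e / 2)"
      have "b < \<beta>" "\<beta> < b + e" using bl e by (auto simp: \<beta>_def)
      then have "\<beta> \<in> Pos" by (rule e(2))
      then have "bs < \<beta>" using Pos_iff by blast
      then show False by (simp add: \<beta>_def)
    qed
  next
    fix b assume "b \<in> {bs..}"
    then have "\<forall>\<beta>. b < \<beta> \<and> \<beta> < b + 1 \<longrightarrow> has_pos_eigenvalue a xs \<beta>"
      using Pos_iff unfolding Pos_def by auto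
    then show "b \<in> {b. \<exists>\<epsilon>>0. \<forall>\<beta>. b < \<beta> \<and> \<beta> < b + \<epsilon> \<longrightarrow> has_pos_eigenvalue a xs \<beta>}"
      by (auto intro!: exI[of _ 1])
  qed
  show ?thesis unfolding beta_c_def S by simp
qed

definition lam where "lam \<beta> = (SOME \<mu>. \<mu> > 0 \<and> gam \<mu> = 1 / \<beta>)"

lemma lam_prop:
  assumes "bs < \<beta>"
  shows "\<beta> > 0" "lam \<beta> > 0" "gam (lam \<beta>) = 1 / \<beta>"
proof -
  have P: "\<beta> \<in> Pos" using assms Pos_iff by blast
  then obtain \<mu>0 where b: "\<beta> > 0" "\<mu>0 > 0" "1 / \<beta> \<le> gam \<mu>0" unfolding Pos_def haspos_iff by blast
  obtain \<mu> where mu: "\<mu> \<ge> \<mu>0" "gam \<mu> = 1 / \<beta>" using exists_root[OF b] by blast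
  have "\<exists>\<mu>. \<mu> > 0 \<and> gam \<mu> = 1 / \<beta>" using mu b by (intro exI[of _ \<mu>]) auto
  then have "lam \<beta> > 0 \<and> gam (lam \<beta>) = 1 / \<beta>" unfolding lam_def by (rule someI_ex)
  then show "\<beta> > 0" "lam \<beta> > 0" "gam (lam \<beta>) = 1 / \<beta>" using b by auto
qed

lemma main:
  "\<exists>\<epsilon>0>0. \<exists>lam::real \<Rightarrow> real.
           (\<forall>\<beta>. beta_c a xs < \<beta> \<and> \<beta> < beta_c a xs + \<epsilon>0 \<longrightarrow>
                lam \<beta> > 0 \<and> is_simple_eigenvalue a xs \<beta> (lam \<beta>)) \<and>
           (lam \<longlongrightarrow> 0) (at_right (beta_c a xs))"
proof (intro exI[of _ 1] exI[of _ lam] conjI allI impI)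
  show "(1::real) > 0" by simp
  fix \<beta> assume "beta_c a xs < \<beta> \<and> \<beta> < beta_c a xs + 1"
  then have bb: "bs < \<beta>" using beta_c_eq by simp
  show "lam \<beta> > 0" using lam_prop[OF bb] by simp
  show "is_simple_eigenvalue a xs \<beta> (lam \<beta>)" using lam_prop[OF bb] by (intro E2) auto
next
  show "(lam \<longlongrightarrow> 0) (at_right (beta_c a xs))"
    unfolding beta_c_eq
  proof (rule tendstoI)
    fix e :: real assume e: "e > 0"
    have ge: "gam e > 0" using PP_gamD(1)[OF e] .
    have ge2: "gam e < gam (e / 2)" by (rule gam_strict) (use e in auto)
    have "bs < 1 / gam (e / 2)" using Pos_iff Pos_gam[of "e / 2"] e by auto
    also have "\<dots> < 1 / gam e" using ge ge2 by (simp add: frac_less2)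
    finally have bl: "bs < 1 / gam e" .
    show "\<forall>\<^sub>F y in at_right bs. dist (lam y) 0 < e"
      unfolding eventually_at_right_field
    proof (intro exI[of _ "1 / gam e"] conjI allI impI)
      show "bs < 1 / gam e" by (rule bl)
      fix y assume y: "bs < y" "y < 1 / gam e"
      note lp = lam_prop[OF y(1)]
      have "gam e < 1 / y" using y(2) lp(1) ge by (simp add: field_simps)
      then have glt: "gam e < gam (lam y)" using lp(3) by simp
      have "lam y < e"
      proof (rule ccontr)
        assume "\<not> lam y < e"
        then have "e \<le> lam y" by simp
        then have "gam (lam y) \<le> gam e"
          using gam_strict[OF e, of "lam y"] by (cases "e = lam y") auto
        then show False using glt by simp
      qed
      then show "dist (lam y) 0 < e" using lp(2) by (simp add: dist_real_def)
    qed
  qed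
qed

end


theorem theorem3:
  fixes a :: "int ^ 'd \<Rightarrow> real" and xs :: "(int ^ 'd) list"
  assumes "walk_kernel a"
    and "condF a \<or> condHT a"
    and "xs \<noteq> []" and "distinct xs"
  shows "\<exists>\<epsilon>0>0. \<exists>lam::real \<Rightarrow> real.
           (\<forall>\<beta>. beta_c a xs < \<beta> \<and> \<beta> < beta_c a xs + \<epsilon>0 \<longrightarrow>
                lam \<beta> > 0 \<and> is_simple_eigenvalue a xs \<beta> (lam \<beta>)) \<and>
           (lam \<longlongrightarrow> 0) (at_right (beta_c a xs))"
proof -
  interpret src a xs
    using assms by unfold_locales (auto simp: walk_def)
  show ?thesis by (rule main)
qed

end
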